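(* Let $G=(V,E)$ be an infinite, connected, locally finite, vertex-transitive graph and $\Gamma$ a group of automorphisms of $G$ acting transitively on $V$. Suppose $h:V\to\mathbb{R}$ is a random function with $\Gamma$-invariant law and $\Delta h\equiv0$. If $h$ can be written as $h=v-u$ with random functions $u\ge0$ and $v$ satisfying $\sup_{x\in V}\mathbb{E}\,v(x)^+<\infty$, then $h$ is almost surely constant.
   Context: $\Delta u(x)=\sum_{y\sim x}(u(y)-u(x))$. A random function $h$ has $\Gamma$-invariant law if $(h(\alpha^{-1}x))_{x\in V}$ has the same law as $h$ for every $\alpha\in\Gamma$. $a^+=\max(a,0)$. *)

theory Defs
  imports "HOL-Probability.Probability"
begin

definition simple_graph :: "('v \<Rightarrow> 'v \<Rightarrow> bool) \<Rightarrow> bool" where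
  "simple_graph E \<longleftrightarrow> (\<forall>x y. E x y \<longrightarrow> E y x) \<and> (\<forall>x. \<not> E x x)"

definition locally_finite :: "('v \<Rightarrow> 'v \<Rightarrow> bool) \<Rightarrow> bool" where
  "locally_finite E \<longleftrightarrow> (\<forall>x. finite {y. E x y})"

definition connected_graph :: "('v \<Rightarrow> 'v \<Rightarrow> bool) \<Rightarrow> bool" where
  "connected_graph E \<longleftrightarrow> (\<forall>x y. (x, y) \<in> {(a, b). E a b}\<^sup>*)"

definition graph_aut :: "('v \<Rightarrow> 'v \<Rightarrow> bool) \<Rightarrow> ('v \<Rightarrow> 'v) \<Rightarrow> bool" where
  "graph_aut E \<alpha> \<longleftrightarrow> bij \<alpha> \<and> (\<forall>x y. E x y \<longleftrightarrow> E (\<alpha> x) (\<alpha> y))"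

definition vertex_transitive :: "('v \<Rightarrow> 'v \<Rightarrow> bool) \<Rightarrow> bool" where
  "vertex_transitive E \<longleftrightarrow> (\<forall>x y. \<exists>\<alpha>. graph_aut E \<alpha> \<and> \<alpha> x = y)"

definition aut_group :: "('v \<Rightarrow> 'v \<Rightarrow> bool) \<Rightarrow> ('v \<Rightarrow> 'v) set \<Rightarrow> bool" where
  "aut_group E \<Gamma> \<longleftrightarrow> (\<forall>\<alpha>\<in>\<Gamma>. graph_aut E \<alpha>) \<and> id \<in> \<Gamma> \<and>
     (\<forall>\<alpha>\<in>\<Gamma>. \<forall>\<beta>\<in>\<Gamma>. \<alpha> \<circ> \<beta> \<in> \<Gamma>) \<and> (\<forall>\<alpha>\<in>\<Gamma>. inv \<alpha> \<in> \<Gamma>)"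

definition transitive_on_vertices :: "('v \<Rightarrow> 'v) set \<Rightarrow> bool" where
  "transitive_on_vertices \<Gamma> \<longleftrightarrow> (\<forall>x y. \<exists>\<alpha>\<in>\<Gamma>. \<alpha> x = y)"

definition graph_laplacian :: "('v \<Rightarrow> 'v \<Rightarrow> bool) \<Rightarrow> ('v \<Rightarrow> real) \<Rightarrow> 'v \<Rightarrow> real" where
  "graph_laplacian E u x = (\<Sum>y\<in>{y. E x y}. u y - u x)"

definition random_function :: "'w measure \<Rightarrow> ('w \<Rightarrow> 'v \<Rightarrow> real) \<Rightarrow> bool" where
  "random_function M h \<longleftrightarrow> (\<forall>x. (\<lambda>\<omega>. h \<omega> x) \<in> borel_measurable M)"

definition law :: "'w measure \<Rightarrow> ('w \<Rightarrow> 'v \<Rightarrow> real) \<Rightarrow> ('v \<Rightarrow> real) measure" where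
  "law M h = distr M (PiM UNIV (\<lambda>_. borel)) h"

definition invariant_law :: "'w measure \<Rightarrow> ('v \<Rightarrow> 'v) set \<Rightarrow> ('w \<Rightarrow> 'v \<Rightarrow> real) \<Rightarrow> bool" where
  "invariant_law M \<Gamma> h \<longleftrightarrow>
     (\<forall>\<alpha>\<in>\<Gamma>. law M (\<lambda>\<omega> x. h \<omega> (inv \<alpha> x)) = law M h)"

end

theory Submission
  imports Defs
begin

lemma countable_vertices:
  fixes E :: "'v \<Rightarrow> 'v \<Rightarrow> bool"
  assumes lf: "locally_finite E" and con: "connected_graph E"
  shows "countable (UNIV :: 'v set)"
proof -
  fix x0 :: 'v
  let ?R = "{(a, b). E a b}"
  have fin: "finite {y. (x0, y) \<in> ?R ^^ n}" for n
  proof (induction n)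
    case 0 then show ?case by simp
  next
    case (Suc n)
    have "{y. (x0, y) \<in> ?R ^^ Suc n} = (\<Union>z\<in>{y. (x0, y) \<in> ?R ^^ n}. {y. E z y})"
      by auto
    then show ?case using Suc lf unfolding locally_finite_def by auto
  qed
  have "UNIV = (\<Union>n. {y. (x0, y) \<in> ?R ^^ n})"
    using con unfolding connected_graph_def by (auto simp: rtrancl_power)
  moreover have "countable (\<Union>n. {y. (x0, y) \<in> ?R ^^ n})"
    using fin by (intro countable_UN) (auto intro: countable_finite)
  ultimately show ?thesis by simp
qed

lemma subharm:
  fixes f :: "'v \<Rightarrow> real"
  assumes fin: "finite N" and h: "(\<Sum>y\<in>N. f y - f x) = 0"
  shows "(\<Sum>y\<in>N. max (f y - c) 0) \<ge> real (card N) * max (f x - c) 0"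
proof (cases "f x \<le> c")
  case True
  then have "real (card N) * max (f x - c) 0 = 0" by simp
  moreover have "(\<Sum>y\<in>N. max (f y - c) 0) \<ge> 0" by (rule sum_nonneg) simp
  ultimately show ?thesis by linarith
next
  case False
  have e1: "(\<Sum>y\<in>N. f y - c) = (\<Sum>y\<in>N. f y - f x) + (\<Sum>y\<in>N. f x - c)"
    by (simp only: sum.distrib[symmetric]) simp
  have e2: "(\<Sum>y\<in>N. f x - c) = real (card N) * (f x - c)" by simp
  have e3: "max (f x - c) 0 = f x - c" using False by simp
  have "(\<Sum>y\<in>N. f y - c) \<le> (\<Sum>y\<in>N. max (f y - c) 0)" by (rule sum_mono) simp
  then show ?thesis using e1 e2 e3 h by simp
qed

lemma det_const:
  fixes f :: "'v \<Rightarrow> real"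
  assumes sg: "simple_graph E" and lf: "locally_finite E" and con: "connected_graph E"
    and eq: "\<forall>x. \<forall>c\<in>\<rat>. (\<Sum>y\<in>{y. E x y}. max (f y - c) 0) = real (card {y. E x y}) * max (f x - c) 0"
  shows "\<exists>c. \<forall>x. f x = c"
proof -
  have le: "f y \<le> f x" if exy: "E x y" for x y
  proof (rule ccontr)
    assume "\<not> f y \<le> f x"
    then have lt: "f x < f y" by simp
    obtain c where c: "c \<in> \<rat>" "f x < c" "c < f y" using Rats_dense_in_real[OF lt] by blast
    have fn: "finite {y. E x y}" using lf unfolding locally_finite_def by blast
    have mx: "max (f x - c) 0 = 0" using c(2) by simp
    have "(\<Sum>y\<in>{y. E x y}. max (f y - c) 0) = real (card {y. E x y}) * max (f x - c) 0"
      using eq c(1) by blast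
    then have "(\<Sum>y\<in>{y. E x y}. max (f y - c) 0) = 0" by (simp only: mx mult_zero_right)
    moreover have "\<forall>z\<in>{y. E x y}. 0 \<le> max (f z - c) 0" by simp
    ultimately have "\<forall>z\<in>{y. E x y}. max (f z - c) 0 = 0"
      using sum_nonneg_eq_0_iff[OF fn, of "\<lambda>z. max (f z - c) 0"] by simp
    then have "max (f y - c) 0 = 0" using exy by blast
    then show False using c(3) by simp
  qed
  have edge: "f x = f y" if "E x y" for x y
  proof -
    have "E y x" using sg that unfolding simple_graph_def by blast
    then show ?thesis using le[OF that] le[of y x] by simp
  qed
  fix x0
  have main: "f x0 = f y" if "(x0, y) \<in> {(a, b). E a b}\<^sup>*" for y
    using that
  proof (induction rule: rtrancl_induct)
    case base then show ?case by simp
  next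
    case (step y z)
    then have "E y z" by simp
    then show ?case using step.IH edge by simp
  qed
  have r: "(x0, y) \<in> {(a, b). E a b}\<^sup>*" for y
    using con unfolding connected_graph_def by blast
  have "\<forall>y. f y = f x0"
  proof
    fix y show "f y = f x0" using main[OF r[of y]] by (rule sym)
  qed
  then show ?thesis by blast
qed

lemma rf_PiM:
  assumes "\<And>x. (\<lambda>\<omega>. f \<omega> x) \<in> borel_measurable M"
  shows "f \<in> measurable M (PiM UNIV (\<lambda>_. (borel :: real measure)))"
proof -
  have "(\<lambda>\<omega> i. f \<omega> i) \<in> measurable M (PiM UNIV (\<lambda>_. (borel :: real measure)))"
  proof (rule measurable_PiM_single')
    show "\<And>i. i \<in> UNIV \<Longrightarrow> (\<lambda>\<omega>. f \<omega> i) \<in> borel_measurable M" by (rule assms)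
    show "(\<lambda>\<omega> i. f \<omega> i) \<in> space M \<rightarrow> (\<Pi>\<^sub>E i\<in>UNIV. space (borel :: real measure))"
      by (simp add: Pi_iff PiE_iff)
  qed
  then show ?thesis by simp
qed

theorem lemma5p4:
  fixes E :: "'v \<Rightarrow> 'v \<Rightarrow> bool"
    and \<Gamma> :: "('v \<Rightarrow> 'v) set"
    and M :: "'w measure"
    and h u v :: "'w \<Rightarrow> 'v \<Rightarrow> real"
  assumes "simple_graph E"
    and "infinite (UNIV :: 'v set)"
    and "connected_graph E"
    and "locally_finite E"
    and "vertex_transitive E"
    and "aut_group E \<Gamma>"
    and "transitive_on_vertices \<Gamma>"
    and "prob_space M"
    and "random_function M h"
    and "invariant_law M \<Gamma> h"
    and "AE \<omega> in M. \<forall>x. graph_laplacian E (h \<omega>) x = 0"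
    and "random_function M u"
    and "random_function M v"
    and "AE \<omega> in M. \<forall>x. u \<omega> x \<ge> 0"
    and "AE \<omega> in M. \<forall>x. h \<omega> x = v \<omega> x - u \<omega> x"
    and "(SUP x. \<integral>\<^sup>+ \<omega>. ennreal (max (v \<omega> x) 0) \<partial>M) < \<infinity>"
  shows "AE \<omega> in M. \<exists>c. \<forall>x. h \<omega> x = c"
proof -
  interpret prob_space M by fact
  note sg = assms(1) and con = assms(3) and lf = assms(4)
  have hm[measurable]: "(\<lambda>\<omega>. h \<omega> x) \<in> borel_measurable M" for x
    using assms(9) unfolding random_function_def by blast
  have vm[measurable]: "(\<lambda>\<omega>. v \<omega> x) \<in> borel_measurable M" for x
    using assms(13) unfolding random_function_def by blast
  define F where "F c x = (\<integral>\<^sup>+ \<omega>. ennreal (max (h \<omega> x - c) 0) \<partial>M)" for c x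
  let ?P = "PiM UNIV (\<lambda>_. (borel :: real measure))"
  have Finv: "F c x = F c y" for c x y
  proof -
    obtain \<alpha> where a: "\<alpha> \<in> \<Gamma>" "\<alpha> x = y" using assms(7) unfolding transitive_on_vertices_def by blast
    have "bij \<alpha>" using a assms(6) unfolding aut_group_def graph_aut_def by auto
    then have ia: "inv \<alpha> y = x" using a by (metis bij_is_inj inv_f_f)
    have law: "distr M ?P (\<lambda>\<omega> z. h \<omega> (inv \<alpha> z)) = distr M ?P h"
      using assms(10) a(1) unfolding invariant_law_def law_def by blast
    have m1: "h \<in> measurable M ?P" by (rule rf_PiM) simp
    have m2: "(\<lambda>\<omega> z. h \<omega> (inv \<alpha> z)) \<in> measurable M ?P" by (rule rf_PiM) simp
    have G: "(\<lambda>f. ennreal (max (f y - c) 0)) \<in> borel_measurable ?P" by measurable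
    have G1: "(\<lambda>f. ennreal (max (f y - c) 0)) \<in> borel_measurable (distr M ?P (\<lambda>\<omega> z. h \<omega> (inv \<alpha> z)))"
      using G by (simp only: measurable_distr_eq1)
    have G2: "(\<lambda>f. ennreal (max (f y - c) 0)) \<in> borel_measurable (distr M ?P h)"
      using G by (simp only: measurable_distr_eq1)
    have "F c x = (\<integral>\<^sup>+ \<omega>. ennreal (max (h \<omega> (inv \<alpha> y) - c) 0) \<partial>M)"
      unfolding F_def ia ..
    also have "\<dots> = integral\<^sup>N (distr M ?P (\<lambda>\<omega> z. h \<omega> (inv \<alpha> z))) (\<lambda>f. ennreal (max (f y - c) 0))"
      by (rule nn_integral_distr[OF m2 G1, symmetric])
    also have "\<dots> = integral\<^sup>N (distr M ?P h) (\<lambda>f. ennreal (max (f y - c) 0))"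
      by (simp only: law)
    also have "\<dots> = F c y"
      unfolding F_def by (rule nn_integral_distr[OF m1 G2])
    finally show ?thesis .
  qed
  have Ffin: "F c x < \<infinity>" for c x
  proof -
    have "AE \<omega> in M. ennreal (max (h \<omega> x - c) 0) \<le> ennreal (max (v \<omega> x) 0) + ennreal \<bar>c\<bar>"
      using assms(14,15)
    proof eventually_elim
      case (elim \<omega>)
      then have "max (h \<omega> x - c) 0 \<le> max (v \<omega> x) 0 + \<bar>c\<bar>" by (smt (verit))
      then have "ennreal (max (h \<omega> x - c) 0) \<le> ennreal (max (v \<omega> x) 0 + \<bar>c\<bar>)"
        by (rule ennreal_leI)
      also have "\<dots> = ennreal (max (v \<omega> x) 0) + ennreal \<bar>c\<bar>" by (rule ennreal_plus) auto
      finally show ?case .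
    qed
    then have "F c x \<le> (\<integral>\<^sup>+ \<omega>. ennreal (max (v \<omega> x) 0) + ennreal \<bar>c\<bar> \<partial>M)"
      unfolding F_def by (rule nn_integral_mono_AE)
    also have "\<dots> = (\<integral>\<^sup>+ \<omega>. ennreal (max (v \<omega> x) 0) \<partial>M) + ennreal \<bar>c\<bar>"
      by (subst nn_integral_add) (auto simp: emeasure_space_1)
    also have "\<dots> < \<infinity>"
    proof -
      have "(\<integral>\<^sup>+ \<omega>. ennreal (max (v \<omega> x) 0) \<partial>M) \<le> (SUP x. \<integral>\<^sup>+ \<omega>. ennreal (max (v \<omega> x) 0) \<partial>M)"
        by (rule SUP_upper) simp
      then show ?thesis using assms(16) by (simp add: le_less_trans)
    qed
    finally show ?thesis .
  qed
  have key: "AE \<omega> in M. (\<Sum>y\<in>{y. E x y}. max (h \<omega> y - c) 0) = real (card {y. E x y}) * max (h \<omega> x - c) 0"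
    for x c
  proof -
    let ?N = "{y. E x y}"
    have fn: "finite ?N" using lf unfolding locally_finite_def by auto
    define A where "A \<omega> = (\<Sum>y\<in>?N. max (h \<omega> y - c) 0)" for \<omega>
    define B where "B \<omega> = real (card ?N) * max (h \<omega> x - c) 0" for \<omega>
    have [measurable]: "A \<in> borel_measurable M" "B \<in> borel_measurable M"
      unfolding A_def B_def by measurable
    have AB: "AE \<omega> in M. B \<omega> \<le> A \<omega>"
      using assms(11) by eventually_elim
        (auto simp: A_def B_def graph_laplacian_def intro!: subharm fn)
    have B0: "B \<omega> \<ge> 0" for \<omega> unfolding B_def by simp
    have iA: "(\<integral>\<^sup>+ \<omega>. ennreal (A \<omega>) \<partial>M) = of_nat (card ?N) * F c x"
    proof -
      have "(\<integral>\<^sup>+ \<omega>. ennreal (A \<omega>) \<partial>M) = (\<integral>\<^sup>+ \<omega>. (\<Sum>y\<in>?N. ennreal (max (h \<omega> y - c) 0)) \<partial>M)"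
        unfolding A_def by (subst sum_ennreal) auto
      also have "\<dots> = (\<Sum>y\<in>?N. F c y)"
        unfolding F_def by (rule nn_integral_sum) measurable
      also have "\<dots> = (\<Sum>y\<in>?N. F c x)" by (intro sum.cong refl Finv)
      finally show ?thesis by simp
    qed
    have iB: "(\<integral>\<^sup>+ \<omega>. ennreal (B \<omega>) \<partial>M) = of_nat (card ?N) * F c x"
    proof -
      have "(\<integral>\<^sup>+ \<omega>. ennreal (B \<omega>) \<partial>M) = (\<integral>\<^sup>+ \<omega>. of_nat (card ?N) * ennreal (max (h \<omega> x - c) 0) \<partial>M)"
        unfolding B_def by (simp add: ennreal_mult ennreal_of_nat_eq_real_of_nat)
      also have "\<dots> = of_nat (card ?N) * F c x"
        unfolding F_def by (rule nn_integral_cmult) measurable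
      finally show ?thesis .
    qed
    have "(\<integral>\<^sup>+ \<omega>. ennreal (A \<omega>) \<partial>M) = (\<integral>\<^sup>+ \<omega>. ennreal (B \<omega>) + ennreal (A \<omega> - B \<omega>) \<partial>M)"
      using AB by (intro nn_integral_cong_AE) (auto simp: B0 ennreal_plus[symmetric] simp del: ennreal_plus elim!: eventually_mono)
    also have "\<dots> = (\<integral>\<^sup>+ \<omega>. ennreal (B \<omega>) \<partial>M) + (\<integral>\<^sup>+ \<omega>. ennreal (A \<omega> - B \<omega>) \<partial>M)"
      by (rule nn_integral_add) measurable
    finally have eq: "of_nat (card ?N) * F c x = of_nat (card ?N) * F c x + (\<integral>\<^sup>+ \<omega>. ennreal (A \<omega> - B \<omega>) \<partial>M)"
      using iA iB by simp
    have "of_nat (card ?N) * F c x \<noteq> \<infinity>"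
      using Ffin[of c x] by (simp add: ennreal_mult_eq_top_iff)
    then have "(\<integral>\<^sup>+ \<omega>. ennreal (A \<omega> - B \<omega>) \<partial>M) = 0"
      using eq by (metis add.right_neutral ennreal_add_left_cancel)
    then have "AE \<omega> in M. ennreal (A \<omega> - B \<omega>) = 0"
      by (subst (asm) nn_integral_0_iff_AE) measurable
    then show ?thesis using AB
      by eventually_elim (auto simp: A_def B_def ennreal_eq_0_iff)
  qed
  have cV: "countable (UNIV :: 'v set)" by (rule countable_vertices[OF lf con])
  have "AE \<omega> in M. \<forall>x\<in>UNIV. \<forall>c\<in>\<rat>. (\<Sum>y\<in>{y. E x y}. max (h \<omega> y - c) 0) = real (card {y. E x y}) * max (h \<omega> x - c) 0"
  proof (rule AE_ball_countable'[OF _ cV])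
    fix x :: 'v
    show "AE \<omega> in M. \<forall>c\<in>\<rat>. (\<Sum>y\<in>{y. E x y}. max (h \<omega> y - c) 0) = real (card {y. E x y}) * max (h \<omega> x - c) 0"
      by (rule AE_ball_countable'[OF key countable_rat])
  qed
  then show ?thesis
    by eventually_elim (rule det_const[OF sg lf con], simp)
qed

end
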